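(* Let $\{\alpha_I\}_{I\in\mathcal{D}}$ be a dyadic Carleson sequence: $\alpha_I\ge0$ and there is $C_0$ with $\sum_{I\subset J,\,I\in\mathcal{D}}\alpha_I|I|\le C_0|J|$ for all $J\in\mathcal{D}$. Let $\Psi:(0,1]\to(0,\infty)$ be a decreasing function such that $s\mapsto s\Psi(s)$ is increasing and $\int_0^1\frac{ds}{s\Psi(s)}<\infty$. Then there is a constant $C$ (depending only on $\Psi$ and $C_0$) such that for every weight $w$ on $\mathbb{R}$ with $\mathbf{n}_\Psi(N_I^w)<\infty$ for all $I\in\mathcal{D}$, every $J\in\mathcal{D}$ and every $f\in L^2(w)$, \[ \sum_{I\in\mathcal{D},\,I\subset J}\mathbf{n}_\Psi(N_I^w)^{-1}\langle fw\rangle_I^2\,\alpha_I\,|I|\le C\int_Jf^2w\,dx, \] where in the summation the intervals $I$ on which $w\equiv0$ are skipped.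
   Context: $\mathcal{D}$ is the standard dyadic lattice of intervals in $\mathbb{R}$. A weight is a nonnegative locally integrable function; $\langle g\rangle_I=\frac1{|I|}\int_Ig$. $N_I^w(t)=\frac{1}{|I|}|\{x\in I:w(x)>t\}|$ and $\mathbf{n}_\Psi(N)=\int_0^\infty N(t)\Psi(N(t))\,dt$ (integrand $0$ where $N(t)=0$). *)

theory Defs
  imports "HOL-Analysis.Analysis"
begin

definition dyadic_interval :: "int \<Rightarrow> int \<Rightarrow> real set" where
  "dyadic_interval j k = {real_of_int k * 2 powr (- real_of_int j) ..< (real_of_int k + 1) * 2 powr (- real_of_int j)}"

definition dyadic_lattice :: "real set set" where
  "dyadic_lattice = {dyadic_interval j k | j k. True}"

definition len :: "real set \<Rightarrow> real" where
  "len I = measure lborel I"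

definition avg :: "(real \<Rightarrow> real) \<Rightarrow> real set \<Rightarrow> real" where
  "avg g I = (set_lebesgue_integral lborel I g) / len I"

definition distN :: "(real \<Rightarrow> real) \<Rightarrow> real set \<Rightarrow> real \<Rightarrow> real" where
  "distN w I t = measure lborel {x \<in> I. w x > t} / len I"

definition nPsi :: "(real \<Rightarrow> real) \<Rightarrow> (real \<Rightarrow> real) \<Rightarrow> ennreal" where
  "nPsi \<Psi> N = (\<integral>\<^sup>+ t \<in> {0<..}. ennreal (if N t = 0 then 0 else N t * \<Psi> (N t)) \<partial>lborel)"

definition carleson_seq :: "(real set \<Rightarrow> real) \<Rightarrow> real \<Rightarrow> bool" where
  "carleson_seq \<alpha> C0 \<longleftrightarrow> (\<forall>I\<in>dyadic_lattice. \<alpha> I \<ge> 0) \<and>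
     (\<forall>J\<in>dyadic_lattice.
        (\<Sum>\<^sub>\<infinity> I \<in> {I \<in> dyadic_lattice. I \<subseteq> J}. ennreal (\<alpha> I * len I)) \<le> ennreal (C0 * len J))"

definition is_weight :: "(real \<Rightarrow> real) \<Rightarrow> bool" where
  "is_weight w \<longleftrightarrow> w \<in> borel_measurable lborel \<and> (\<forall>x. w x \<ge> 0) \<and>
     (\<forall>K. compact K \<longrightarrow> set_integrable lborel K w)"

definition in_L2w :: "(real \<Rightarrow> real) \<Rightarrow> (real \<Rightarrow> real) \<Rightarrow> bool" where
  "in_L2w w f \<longleftrightarrow> f \<in> borel_measurable lborel \<and>
     (\<integral>\<^sup>+ x. ennreal ((f x)\<^sup>2 * w x) \<partial>lborel) < \<infinity>"

end

theory Submission
  imports Defs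
begin


lemma dy_iff: "x \<in> dyadic_interval j k \<longleftrightarrow> \<lfloor>x * 2 powr j\<rfloor> = k"
proof -
  have p: "2 powr (real_of_int j) > 0" by simp
  have m: "2 powr (- real_of_int j) = 1 / 2 powr (real_of_int j)" by (simp add: powr_minus_divide)
  have "x \<in> dyadic_interval j k \<longleftrightarrow> real_of_int k \<le> x * 2 powr j \<and> x * 2 powr j < real_of_int k + 1"
    unfolding dyadic_interval_def m using p by (simp add: field_simps)
  also have "\<dots> \<longleftrightarrow> \<lfloor>x * 2 powr j\<rfloor> = k" by linarith
  finally show ?thesis .
qed

lemma dy_nonempty: "real_of_int k * 2 powr (- real_of_int j) \<in> dyadic_interval j k"
  unfolding dyadic_interval_def by simp

lemma dy_len: "len (dyadic_interval j k) = 2 powr (- real_of_int j)"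
  unfolding len_def dyadic_interval_def by (simp add: algebra_simps)

lemma dy_sets_borel[measurable]: "dyadic_interval j k \<in> sets borel"
  unfolding dyadic_interval_def by simp

lemma dy_sets: "dyadic_interval j k \<in> sets lborel"
  by simp

lemma dy_bounded: "dyadic_interval j k \<subseteq> {real_of_int k * 2 powr (- real_of_int j) .. (real_of_int k + 1) * 2 powr (- real_of_int j)}"
  unfolding dyadic_interval_def by auto

lemma dy_floor_shift:
  assumes "j \<le> j'"
  shows "\<lfloor>x * 2 powr j\<rfloor> = \<lfloor>x * 2 powr j'\<rfloor> div 2 ^ nat (j' - j)"
proof -
  have e: "2 powr (real_of_int j') = 2 powr (real_of_int j) * real_of_int (2 ^ nat (j' - j))"
  proof -
    have "2 powr (real_of_int j') = 2 powr (real_of_int j + real (nat (j' - j)))"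
      using assms by simp
    also have "\<dots> = 2 powr (real_of_int j) * 2 ^ nat (j' - j)"
      by (simp add: powr_add powr_realpow)
    finally show ?thesis by simp
  qed
  have "x * 2 powr j = (x * 2 powr j') / real_of_int (2 ^ nat (j' - j))"
    by (simp add: e)
  then show ?thesis using floor_divide_real_eq_div[of "2 ^ nat (j' - j)" "x * 2 powr j'"] by simp
qed

lemma dy_sub_anc:
  assumes "j \<le> j'"
  shows "dyadic_interval j' k' \<subseteq> dyadic_interval j (k' div 2 ^ nat (j' - j))"
  using dy_floor_shift[OF assms] by (auto simp: dy_iff)

lemma dy_nest:
  assumes "j \<le> j'"
  shows "dyadic_interval j' k' \<subseteq> dyadic_interval j k \<or> dyadic_interval j' k' \<inter> dyadic_interval j k = {}"
proof (cases "k = k' div 2 ^ nat (j' - j)")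
  case True then show ?thesis using dy_sub_anc[OF assms] by auto
next
  case False
  { fix x assume "x \<in> dyadic_interval j' k'" "x \<in> dyadic_interval j k"
    then have False using False dy_floor_shift[OF assms, of x] by (auto simp: dy_iff) }
  then show ?thesis by auto
qed

lemma dyadic_lattice_iff: "I \<in> dyadic_lattice \<longleftrightarrow> (\<exists>j k. I = dyadic_interval j k)"
  unfolding dyadic_lattice_def by auto

lemma dy_nest_or_disj:
  assumes "I \<in> dyadic_lattice" "I' \<in> dyadic_lattice"
  shows "I \<subseteq> I' \<or> I' \<subseteq> I \<or> I \<inter> I' = {}"
proof -
  obtain j k j' k' where a: "I = dyadic_interval j k" "I' = dyadic_interval j' k'"
    using assms by (auto simp: dyadic_lattice_iff)
  show ?thesis
  proof (cases "j \<le> j'")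
    case True then show ?thesis using dy_nest[OF True, of k' k] a by auto
  next
    case False then have "j' \<le> j" by simp
    then show ?thesis using dy_nest[of j' j k k'] a by auto
  qed
qed

lemma dy_len_pos: "I \<in> dyadic_lattice \<Longrightarrow> len I > 0"
  by (auto simp: dyadic_lattice_iff dy_len)

lemma dy_ne: "I \<in> dyadic_lattice \<Longrightarrow> I \<noteq> {}"
  using dy_nonempty by (auto simp: dyadic_lattice_iff)

lemma dy_sets': "I \<in> dyadic_lattice \<Longrightarrow> I \<in> sets lborel"
  by (auto simp: dyadic_lattice_iff)

lemma dy_emeasure: "emeasure lborel (dyadic_interval j k) = ennreal (2 powr (- real_of_int j))"
  unfolding dyadic_interval_def by (simp add: algebra_simps)

lemma dy_level_le:
  assumes "dyadic_interval j' k' \<subseteq> dyadic_interval j k"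
  shows "j \<le> j'"
proof -
  have "emeasure lborel (dyadic_interval j' k') \<le> emeasure lborel (dyadic_interval j k)"
    using assms by (intro emeasure_mono) auto
  then have "2 powr (- real_of_int j') \<le> 2 powr (- real_of_int j)"
    by (simp add: dy_emeasure)
  then show ?thesis by simp
qed

lemma dy_children:
  "dyadic_interval j k = dyadic_interval (j+1) (2*k) \<union> dyadic_interval (j+1) (2*k+1)"
  "dyadic_interval (j+1) (2*k) \<inter> dyadic_interval (j+1) (2*k+1) = {}"
proof -
  have s: "\<lfloor>x * 2 powr j\<rfloor> = \<lfloor>x * 2 powr (j+1)\<rfloor> div 2" for x
    using dy_floor_shift[of j "j+1" x] by simp
  show "dyadic_interval j k = dyadic_interval (j+1) (2*k) \<union> dyadic_interval (j+1) (2*k+1)"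
    by (auto simp: dy_iff s)
  show "dyadic_interval (j+1) (2*k) \<inter> dyadic_interval (j+1) (2*k+1) = {}"
    by (auto simp: dy_iff)
qed

lemma dy_sub_cases:
  assumes "dyadic_interval j' k' \<subseteq> dyadic_interval j k"
  shows "(j' = j \<and> k' = k) \<or> dyadic_interval j' k' \<subseteq> dyadic_interval (j+1) (2*k)
        \<or> dyadic_interval j' k' \<subseteq> dyadic_interval (j+1) (2*k+1)"
proof -
  have jj: "j \<le> j'" using dy_level_le[OF assms] .
  define x where "x = real_of_int k' * 2 powr (- real_of_int j')"
  have x1: "x \<in> dyadic_interval j' k'" unfolding x_def by (rule dy_nonempty)
  have x2: "x \<in> dyadic_interval j k" using x1 assms by auto
  show ?thesis
  proof (cases "j' = j")
    case True then show ?thesis using x1 x2 by (auto simp: dy_iff)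
  next
    case False
    then have jj': "j + 1 \<le> j'" using jj by simp
    define k'' where "k'' = \<lfloor>x * 2 powr (j+1)\<rfloor>"
    have "dyadic_interval j' k' \<subseteq> dyadic_interval (j+1) (k' div 2 ^ nat (j' - (j+1)))"
      by (rule dy_sub_anc[OF jj'])
    moreover have "k' div 2 ^ nat (j' - (j+1)) = k''"
      using x1 dy_floor_shift[OF jj', of x] by (simp add: dy_iff k''_def)
    moreover have "k'' div 2 = k"
      using x2 dy_floor_shift[of j "j+1" x] by (simp add: dy_iff k''_def)
    then have "k'' = 2*k \<or> k'' = 2*k+1" by auto
    ultimately show ?thesis by auto
  qed
qed


lemma weight_meas: "is_weight w \<Longrightarrow> w \<in> borel_measurable borel"
  unfolding is_weight_def by simp

lemma weight_nn: "is_weight w \<Longrightarrow> w x \<ge> 0"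
  unfolding is_weight_def by simp

lemma L2_meas: "in_L2w w f \<Longrightarrow> f \<in> borel_measurable borel"
  unfolding in_L2w_def by simp

lemma w_setint:
  assumes "is_weight w" "I \<in> dyadic_lattice"
  shows "set_integrable lborel I w"
proof -
  obtain j k where I: "I = dyadic_interval j k" using assms(2) by (auto simp: dyadic_lattice_iff)
  let ?K = "{real_of_int k * 2 powr (- real_of_int j) .. (real_of_int k + 1) * 2 powr (- real_of_int j)}"
  have "set_integrable lborel ?K w" using assms(1) unfolding is_weight_def by auto
  then show ?thesis unfolding I by (rule set_integrable_subset) (auto simp: dy_bounded)
qed

lemma f2w_int:
  assumes "is_weight w" "in_L2w w f"
  shows "integrable lborel (\<lambda>x. (f x)^2 * w x)"
proof (rule integrableI_nonneg)
  show "(\<lambda>x. (f x)^2 * w x) \<in> borel_measurable lborel"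
    using weight_meas[OF assms(1)] L2_meas[OF assms(2)] by measurable
  show "AE x in lborel. 0 \<le> (f x)^2 * w x" using weight_nn[OF assms(1)] by simp
  show "(\<integral>\<^sup>+ x. ennreal ((f x)^2 * w x) \<partial>lborel) < \<infinity>" using assms(2) unfolding in_L2w_def by simp
qed

lemma f2w_setint:
  assumes "is_weight w" "in_L2w w f" "I \<in> sets lborel"
  shows "set_integrable lborel I (\<lambda>x. (f x)^2 * w x)"
  unfolding set_integrable_def by (rule integrable_mult_indicator[OF assms(3) f2w_int[OF assms(1,2)]])

lemma fw_setint:
  assumes "is_weight w" "in_L2w w f" "I \<in> dyadic_lattice"
  shows "set_integrable lborel I (\<lambda>x. f x * w x)"
proof (rule set_integrable_bound)
  have I: "I \<in> sets lborel" using assms(3) by (rule dy_sets')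
  show "set_integrable lborel I (\<lambda>x. (f x)^2 * w x + w x)"
    using f2w_setint[OF assms(1,2) I] w_setint[OF assms(1,3)] by (rule set_integral_add(1))
  show "set_borel_measurable lborel I (\<lambda>x. f x * w x)"
    unfolding set_borel_measurable_def
    using weight_meas[OF assms(1)] L2_meas[OF assms(2)] I by measurable
  show "AE x\<in>I in lborel. norm (f x * w x) \<le> norm ((f x)^2 * w x + w x)"
  proof (intro AE_I2 impI)
    fix x
    have w: "w x \<ge> 0" using weight_nn[OF assms(1)] .
    have "\<bar>f x\<bar> \<le> (f x)^2 + 1"
    proof (cases "\<bar>f x\<bar> \<le> 1")
      case True then show ?thesis by (simp add: add_increasing)
    next
      case False
      then have "\<bar>f x\<bar> * 1 \<le> \<bar>f x\<bar> * \<bar>f x\<bar>" by (intro mult_left_mono) auto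
      then show ?thesis by (simp add: power2_eq_square abs_mult_self_eq)
    qed
    then have "\<bar>f x\<bar> * w x \<le> ((f x)^2 + 1) * w x" using w by (intro mult_right_mono) auto
    then show "norm (f x * w x) \<le> norm ((f x)^2 * w x + w x)"
      using w by (simp add: abs_mult algebra_simps)
  qed
qed

lemma setint_nonneg:
  fixes g :: "real \<Rightarrow> real"
  assumes "\<And>x. g x \<ge> 0"
  shows "set_lebesgue_integral lborel I g \<ge> 0"
  unfolding set_lebesgue_integral_def using assms by (intro Bochner_Integration.integral_nonneg) (simp add: indicator_def)

lemma cs_quad:
  assumes "is_weight w" "in_L2w w f" "I \<in> dyadic_lattice"
  shows "0 \<le> set_lebesgue_integral lborel I (\<lambda>x. (f x)^2 * w x)
           - 2 * c * set_lebesgue_integral lborel I (\<lambda>x. f x * w x)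
           + c^2 * set_lebesgue_integral lborel I w"
proof -
  have I: "I \<in> sets lborel" using assms(3) by (rule dy_sets')
  note i1 = f2w_setint[OF assms(1,2) I] and i2 = fw_setint[OF assms] and i3 = w_setint[OF assms(1,3)]
  have i2': "set_integrable lborel I (\<lambda>x. (2*c) * (f x * w x))" using i2 by (rule set_integrable_mult_right)
  have i3': "set_integrable lborel I (\<lambda>x. c^2 * w x)" using i3 by (rule set_integrable_mult_right)
  have eq: "(\<lambda>x. (f x - c)^2 * w x) = (\<lambda>x. ((f x)^2 * w x - (2*c) * (f x * w x)) + c^2 * w x)"
    by (auto simp: power2_eq_square algebra_simps)
  have "0 \<le> set_lebesgue_integral lborel I (\<lambda>x. (f x - c)^2 * w x)"
    using weight_nn[OF assms(1)] by (intro setint_nonneg) simp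
  also have "\<dots> = set_lebesgue_integral lborel I (\<lambda>x. (f x)^2 * w x - (2*c) * (f x * w x)) + set_lebesgue_integral lborel I (\<lambda>x. c^2 * w x)"
    unfolding eq using set_integral_diff(1)[OF i1 i2'] i3' by (rule set_integral_add(2))
  also have "set_lebesgue_integral lborel I (\<lambda>x. (f x)^2 * w x - (2*c) * (f x * w x)) =
     set_lebesgue_integral lborel I (\<lambda>x. (f x)^2 * w x) - set_lebesgue_integral lborel I (\<lambda>x. (2*c) * (f x * w x))"
    using i1 i2' by (rule set_integral_diff(2))
  finally show ?thesis by (simp add: set_integral_mult_right)
qed

lemma cs_ineq:
  fixes P A M :: real
  assumes "\<And>c. 0 \<le> P - 2*c*A + c^2*M" "M \<ge> 0"
  shows "A^2 \<le> P * M" "M = 0 \<Longrightarrow> A = 0"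
proof -
  show z: "A = 0" if "M = 0"
  proof (rule ccontr)
    assume "A \<noteq> 0"
    have "0 \<le> P - 2*((P+1)/(2*A))*A + ((P+1)/(2*A))^2*M" by (rule assms(1))
    then show False using that \<open>A \<noteq> 0\<close> by simp
  qed
  show "A^2 \<le> P * M"
  proof (cases "M = 0")
    case True then show ?thesis using z by simp
  next
    case False
    then have M: "M > 0" using assms(2) by simp
    have "0 \<le> P - 2*(A/M)*A + (A/M)^2*M" by (rule assms(1))
    then have "0 \<le> P - A^2/M" using M by (simp add: power2_eq_square field_simps)
    then have "A^2/M \<le> P" by simp
    then show ?thesis using M by (simp add: divide_simps)
  qed
qed

lemma layer_cake:
  assumes "is_weight w" "I \<in> dyadic_lattice"
  shows "(\<integral>\<^sup>+ t\<in>{0<..}. emeasure lborel {x\<in>I. w x > t} \<partial>lborel) = ennreal (set_lebesgue_integral lborel I w)"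
proof -
  have wm[measurable]: "w \<in> borel_measurable borel" using weight_meas[OF assms(1)] .
  have I[measurable]: "I \<in> sets borel" using dy_sets'[OF assms(2)] by simp
  have wn: "w x \<ge> 0" for x using weight_nn[OF assms(1)] .
  define H where "H = (\<lambda>x t. indicator {p::real\<times>real. fst p \<in> I \<and> 0 < snd p \<and> snd p < w (fst p)} (x,t) :: ennreal)"
  have Hm: "case_prod H \<in> borel_measurable (lborel \<Otimes>\<^sub>M lborel)"
    unfolding H_def by measurable
  have inner1: "(\<integral>\<^sup>+ t. H x t \<partial>lborel) = ennreal (w x) * indicator I x" for x
  proof -
    have "(\<lambda>t. H x t) = (\<lambda>t. indicator I x * indicator {0<..<w x} t)"
      by (auto simp: H_def indicator_def fun_eq_iff)
    then have "(\<integral>\<^sup>+ t. H x t \<partial>lborel) = indicator I x * emeasure lborel {0<..<w x}"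
      by (simp add: nn_integral_cmult_indicator)
    also have "\<dots> = ennreal (w x) * indicator I x" using wn[of x] by (simp add: mult.commute)
    finally show ?thesis .
  qed
  have inner2: "(\<integral>\<^sup>+ x. H x t \<partial>lborel) = emeasure lborel {x\<in>I. w x > t} * indicator {0<..} t" for t
  proof -
    have "(\<lambda>x. H x t) = (\<lambda>x. indicator {0<..} t * indicator {x\<in>I. w x > t} x)"
      by (auto simp: H_def indicator_def fun_eq_iff)
    moreover have "{x\<in>I. w x > t} \<in> sets lborel" by measurable
    ultimately show ?thesis by (simp add: nn_integral_cmult_indicator mult.commute)
  qed
  have "(\<integral>\<^sup>+ t\<in>{0<..}. emeasure lborel {x\<in>I. w x > t} \<partial>lborel) = (\<integral>\<^sup>+ t. (\<integral>\<^sup>+ x. H x t \<partial>lborel) \<partial>lborel)"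
    by (simp add: inner2)
  also have "\<dots> = (\<integral>\<^sup>+ x. (\<integral>\<^sup>+ t. H x t \<partial>lborel) \<partial>lborel)"
    using Hm by (rule lborel_pair.Fubini')
  also have "\<dots> = (\<integral>\<^sup>+ x\<in>I. ennreal (w x) \<partial>lborel)" by (simp add: inner1)
  also have "\<dots> = (\<integral>\<^sup>+ x\<in>I. ennreal (indicator I x * w x) \<partial>lborel)"
    by (intro nn_integral_cong) (auto simp: indicator_def)
  also have "\<dots> = ennreal (set_lebesgue_integral lborel I (\<lambda>x. indicator I x * w x))"
  proof (rule nn_set_integral_eq_set_integral)
    show "integrable lborel (\<lambda>x. indicator I x * w x)"
      using w_setint[OF assms] unfolding set_integrable_def by simp
    show "AE x\<in>I in lborel. 0 \<le> indicator I x * w x" using wn by simp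
  qed simp
  also have "set_lebesgue_integral lborel I (\<lambda>x. indicator I x * w x) = set_lebesgue_integral lborel I w"
    unfolding set_lebesgue_integral_def by (intro Bochner_Integration.integral_cong) (auto simp: indicator_def)
  finally show ?thesis .
qed


lemma titu:
  fixes a b D E :: real
  assumes "D \<ge> 0" "E \<ge> 0" "D = 0 \<Longrightarrow> a = 0" "E = 0 \<Longrightarrow> b = 0"
  shows "(a+b)^2/(D+E) \<le> a^2/D + b^2/E"
proof (cases "D = 0 \<or> E = 0")
  case True then show ?thesis using assms by auto
next
  case False
  then have D: "D > 0" and E: "E > 0" using assms by auto
  have "(a+b)^2 * (D*E) \<le> (a^2*E + b^2*D)*(D+E)"
  proof -
    have "0 \<le> (a*E - b*D)^2" by simp
    then show ?thesis by (simp add: power2_eq_square algebra_simps)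
  qed
  then have "(a+b)^2/(D+E) \<le> (a^2*E + b^2*D)/(D*E)"
    using D E by (simp add: divide_simps mult.commute)
  also have "\<dots> = a^2/D + b^2/E" using D E by (simp add: field_simps)
  finally show ?thesis .
qed

lemma bonus:
  fixes a b D m :: real
  assumes "m > 0" "D \<ge> m" "D + b \<le> 2*m" "b \<ge> 0"
  shows "b*(a/m)^2 + 4*a^2/(D+b) \<le> 4*a^2/D"
proof -
  have D: "D > 0" using assms by simp
  have Db: "D + b > 0" using assms by simp
  have "D*(D+b) \<le> 4*m^2"
  proof -
    have "D*(D+b) \<le> (2*m)*(2*m)" using assms D by (intro mult_mono) auto
    then show ?thesis by (simp add: power2_eq_square)
  qed
  have "b*(a/m)^2 = 4*a^2*b/(4*m^2)" using assms by (simp add: field_simps power2_eq_square)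
  also have "\<dots> \<le> 4*a^2*b/(D*(D+b))"
    using \<open>D*(D+b) \<le> 4*m^2\<close> assms D Db by (intro divide_left_mono) auto
  also have "\<dots> = 4*a^2/D - 4*a^2/(D+b)"
    using D Db by (simp add: field_simps)
  finally show ?thesis by simp
qed

lemma sum_split_children:
  fixes h :: "real set \<Rightarrow> 'b::comm_monoid_add"
  assumes F: "finite F" "F \<subseteq> dyadic_lattice"
  shows "(\<Sum>I'\<in>{I'\<in>F. I' \<subseteq> dyadic_interval j k}. h I') =
     (if dyadic_interval j k \<in> F then h (dyadic_interval j k) else 0)
     + (\<Sum>I'\<in>{I'\<in>F. I' \<subseteq> dyadic_interval (j+1) (2*k)}. h I')
     + (\<Sum>I'\<in>{I'\<in>F. I' \<subseteq> dyadic_interval (j+1) (2*k+1)}. h I')"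
proof -
  let ?I = "dyadic_interval j k" and ?L = "dyadic_interval (j+1) (2*k)" and ?R = "dyadic_interval (j+1) (2*k+1)"
  have ch: "?I = ?L \<union> ?R" "?L \<inter> ?R = {}" by (rule dy_children)+
  have neL: "?L \<noteq> {}" and neR: "?R \<noteq> {}" using dy_nonempty by blast+
  have IL: "\<not> ?I \<subseteq> ?L" using ch neR by blast
  have IR: "\<not> ?I \<subseteq> ?R" using ch neL by blast
  have A: "{I'\<in>F. I' \<subseteq> ?I} = ({?I} \<inter> F) \<union> ({I'\<in>F. I' \<subseteq> ?L} \<union> {I'\<in>F. I' \<subseteq> ?R})"
  proof (intro equalityI subsetI)
    fix I' assume "I' \<in> {I'\<in>F. I' \<subseteq> ?I}"
    then have "I' \<in> F" "I' \<subseteq> ?I" by auto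
    have "I' \<in> dyadic_lattice" using F \<open>I' \<in> F\<close> by blast
    then obtain j' k' where "I' = dyadic_interval j' k'" by (auto simp: dyadic_lattice_iff)
    then show "I' \<in> ({?I} \<inter> F) \<union> ({I'\<in>F. I' \<subseteq> ?L} \<union> {I'\<in>F. I' \<subseteq> ?R})"
      using dy_sub_cases[of j' k' j k] \<open>I' \<in> F\<close> \<open>I' \<subseteq> ?I\<close> by auto
  next
    fix I' assume "I' \<in> ({?I} \<inter> F) \<union> ({I'\<in>F. I' \<subseteq> ?L} \<union> {I'\<in>F. I' \<subseteq> ?R})"
    then show "I' \<in> {I'\<in>F. I' \<subseteq> ?I}" using ch by auto
  qed
  have d1: "({I'\<in>F. I' \<subseteq> ?L} \<inter> {I'\<in>F. I' \<subseteq> ?R}) = {}"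
  proof -
    { fix I' assume "I' \<in> F" "I' \<subseteq> ?L" "I' \<subseteq> ?R"
      then have "I' = {}" using ch by blast
      then have False using \<open>I' \<in> F\<close> F dy_ne by blast }
    then show ?thesis by blast
  qed
  have d2: "({?I} \<inter> F) \<inter> ({I'\<in>F. I' \<subseteq> ?L} \<union> {I'\<in>F. I' \<subseteq> ?R}) = {}"
    using IL IR by blast
  have "(\<Sum>I'\<in>{I'\<in>F. I' \<subseteq> ?I}. h I') = (\<Sum>I'\<in>{?I} \<inter> F. h I') + (\<Sum>I'\<in>{I'\<in>F. I' \<subseteq> ?L} \<union> {I'\<in>F. I' \<subseteq> ?R}. h I')"
    unfolding A using F d2 by (intro sum.union_disjoint) auto
  also have "(\<Sum>I'\<in>{I'\<in>F. I' \<subseteq> ?L} \<union> {I'\<in>F. I' \<subseteq> ?R}. h I') = (\<Sum>I'\<in>{I'\<in>F. I' \<subseteq> ?L}. h I') + (\<Sum>I'\<in>{I'\<in>F. I' \<subseteq> ?R}. h I')"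
    using F d1 by (intro sum.union_disjoint) auto
  also have "(\<Sum>I'\<in>{?I} \<inter> F. h I') = (if ?I \<in> F then h ?I else 0)" by auto
  finally show ?thesis by (simp add: add.assoc)
qed

lemma bellman:
  fixes \<mu> a \<Phi> \<beta> :: "real set \<Rightarrow> real" and F :: "real set set"
  assumes F: "finite F" "F \<subseteq> dyadic_lattice"
    and add_mu: "\<And>j k. \<mu> (dyadic_interval j k) = \<mu> (dyadic_interval (j+1) (2*k)) + \<mu> (dyadic_interval (j+1) (2*k+1))"
    and add_a: "\<And>j k. a (dyadic_interval j k) = a (dyadic_interval (j+1) (2*k)) + a (dyadic_interval (j+1) (2*k+1))"
    and add_Phi: "\<And>j k. \<Phi> (dyadic_interval j k) = \<Phi> (dyadic_interval (j+1) (2*k)) + \<Phi> (dyadic_interval (j+1) (2*k+1))"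
    and mu_nn: "\<And>j k. \<mu> (dyadic_interval j k) \<ge> 0"
    and Phi_nn: "\<And>j k. \<Phi> (dyadic_interval j k) \<ge> 0"
    and cs: "\<And>j k. (a (dyadic_interval j k))^2 \<le> \<Phi> (dyadic_interval j k) * \<mu> (dyadic_interval j k)"
    and z: "\<And>j k. \<mu> (dyadic_interval j k) = 0 \<Longrightarrow> a (dyadic_interval j k) = 0"
    and beta_nn: "\<And>I. I \<in> F \<Longrightarrow> \<beta> I \<ge> 0"
    and carl: "\<And>j k. (\<Sum>I'\<in>{I'\<in>F. I' \<subseteq> dyadic_interval j k}. \<beta> I') \<le> \<mu> (dyadic_interval j k)"
  shows "(\<Sum>I'\<in>{I'\<in>F. I' \<subseteq> dyadic_interval j k}. \<beta> I' * (a I' / \<mu> I')^2) \<le> 4 * \<Phi> (dyadic_interval j k)"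
proof -
  define S where "S I = (\<Sum>I'\<in>{I'\<in>F. I' \<subseteq> I}. \<beta> I')" for I
  define T where "T I = (\<Sum>I'\<in>{I'\<in>F. I' \<subseteq> I}. \<beta> I' * (a I' / \<mu> I')^2)" for I
  define G where "G I = 4 * (\<Phi> I - (a I)^2 / (\<mu> I + S I))" for I
  have S_nn: "S I \<ge> 0" for I unfolding S_def using beta_nn by (intro sum_nonneg) auto
  have G_nn: "G (dyadic_interval j k) \<ge> 0" for j k
  proof (cases "\<mu> (dyadic_interval j k) = 0")
    case True then show ?thesis using z Phi_nn by (simp add: G_def)
  next
    case False
    let ?I = "dyadic_interval j k"
    have m: "\<mu> ?I > 0" using False mu_nn[of j k] by simp
    have "(a ?I)^2 / (\<mu> ?I + S ?I) \<le> (a ?I)^2 / \<mu> ?I"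
      using m S_nn[of ?I] by (intro divide_left_mono mult_pos_pos add_pos_nonneg) auto
    also have "\<dots> \<le> \<Phi> ?I" using cs[of j k] m by (simp add: divide_simps)
    finally show ?thesis by (simp add: G_def)
  qed
  define lev where "lev I = (SOME j. \<exists>k. I = dyadic_interval j k)" for I
  have lev: "\<exists>k. I = dyadic_interval (lev I) k" if "I \<in> F" for I
  proof -
    have "\<exists>j k. I = dyadic_interval j k" using that F by (auto simp: dyadic_lattice_iff)
    then show ?thesis unfolding lev_def by (rule someI_ex)
  qed
  define M where "M = (if F = {} then 0 else Max (lev ` F) + 1)"
  have levM: "lev I < M" if "I \<in> F" for I
    using that F by (auto simp: M_def intro!: Max_ge le_imp_less_Suc)
  have main: "\<forall>j. j \<ge> M - int n \<longrightarrow> (\<forall>k. T (dyadic_interval j k) \<le> G (dyadic_interval j k))" for n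
  proof (induction n)
    case 0
    show ?case
    proof (intro allI impI)
      fix j k assume "j \<ge> M - int 0"
      have "{I'\<in>F. I' \<subseteq> dyadic_interval j k} = {}"
      proof (rule ccontr)
        assume "{I'\<in>F. I' \<subseteq> dyadic_interval j k} \<noteq> {}"
        then obtain I' where "I' \<in> F" "I' \<subseteq> dyadic_interval j k" by auto
        then obtain k' where "I' = dyadic_interval (lev I') k'" using lev by blast
        then have "j \<le> lev I'" using dy_level_le \<open>I' \<subseteq> _\<close> by metis
        then show False using levM[OF \<open>I' \<in> F\<close>] \<open>j \<ge> M - int 0\<close> by simp
      qed
      then have "T (dyadic_interval j k) = 0" unfolding T_def by (simp only: sum.empty)
      then show "T (dyadic_interval j k) \<le> G (dyadic_interval j k)"
        using G_nn by simp
    qed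
  next
    case (Suc n)
    show ?case
    proof (intro allI impI)
      fix j k assume j: "j \<ge> M - int (Suc n)"
      show "T (dyadic_interval j k) \<le> G (dyadic_interval j k)"
      proof (cases "j \<ge> M - int n")
        case True then show ?thesis using Suc.IH by blast
      next
        case False
        then have j1: "j + 1 \<ge> M - int n" using j by simp
        let ?I = "dyadic_interval j k" and ?L = "dyadic_interval (j+1) (2*k)" and ?R = "dyadic_interval (j+1) (2*k+1)"
        have TL: "T ?L \<le> G ?L" and TR: "T ?R \<le> G ?R" using Suc.IH j1 by blast+
        define b where "b = (if ?I \<in> F then \<beta> ?I else 0)"
        have b_nn: "b \<ge> 0" using beta_nn by (simp add: b_def)
        have Tsplit: "T ?I = b * (a ?I / \<mu> ?I)^2 + T ?L + T ?R"
          unfolding T_def b_def using sum_split_children[OF F, of "\<lambda>I'. \<beta> I' * (a I' / \<mu> I')^2" j k] by simp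
        have Ssplit: "S ?I = b + S ?L + S ?R"
          unfolding S_def b_def using sum_split_children[OF F, of \<beta> j k] by simp
        define DL where "DL = \<mu> ?L + S ?L"
        define DR where "DR = \<mu> ?R + S ?R"
        have DL0: "DL \<ge> 0" "DL = 0 \<Longrightarrow> a ?L = 0"
          using mu_nn[of "j+1" "2*k"] S_nn[of ?L] z[of "j+1" "2*k"] by (auto simp: DL_def)
        have DR0: "DR \<ge> 0" "DR = 0 \<Longrightarrow> a ?R = 0"
          using mu_nn[of "j+1" "2*k+1"] S_nn[of ?R] z[of "j+1" "2*k+1"] by (auto simp: DR_def)
        have tt: "(a ?I)^2/(DL+DR) \<le> (a ?L)^2/DL + (a ?R)^2/DR"
          unfolding add_a[of j k] by (rule titu[OF DL0(1) DR0(1) DL0(2) DR0(2)])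
        have DI: "\<mu> ?I + S ?I = DL + DR + b"
          using Ssplit add_mu[of j k] by (simp add: DL_def DR_def)
        have bon: "b * (a ?I / \<mu> ?I)^2 + 4*(a ?I)^2/(DL+DR+b) \<le> 4*(a ?I)^2/(DL+DR)"
        proof (cases "\<mu> ?I = 0")
          case True then show ?thesis using z[of j k] by simp
        next
          case False
          then have m: "\<mu> ?I > 0" using mu_nn[of j k] by simp
          have "DL + DR \<ge> \<mu> ?I" using add_mu[of j k] S_nn[of ?L] S_nn[of ?R] by (simp add: DL_def DR_def)
          moreover have "DL + DR + b \<le> 2 * \<mu> ?I" using DI carl[of j k] by (simp add: S_def)
          ultimately show ?thesis by (intro bonus[OF m _ _ b_nn])
        qed
        have "T ?I \<le> b * (a ?I / \<mu> ?I)^2 + G ?L + G ?R" using Tsplit TL TR by simp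
        also have "\<dots> = b * (a ?I / \<mu> ?I)^2 + 4 * \<Phi> ?I - 4 * ((a ?L)^2/DL + (a ?R)^2/DR)"
          using add_Phi[of j k] by (simp add: G_def DL_def DR_def algebra_simps)
        also have "\<dots> \<le> b * (a ?I / \<mu> ?I)^2 + 4 * \<Phi> ?I - 4 * ((a ?I)^2/(DL+DR))"
          using tt by simp
        also have "\<dots> \<le> 4 * \<Phi> ?I - 4*(a ?I)^2/(DL+DR+b)"
          using bon by simp
        also have "\<dots> = G ?I" using DI by (simp add: G_def)
        finally show ?thesis .
      qed
    qed
  qed
  have "T (dyadic_interval j k) \<le> G (dyadic_interval j k)"
    using main[of "nat (M - j)"] by simp
  also have "\<dots> \<le> 4 * \<Phi> (dyadic_interval j k)"
    using mu_nn[of j k] S_nn by (simp add: G_def)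
  finally show ?thesis by (simp add: T_def)
qed


lemma antimono_meas:
  fixes h :: "real \<Rightarrow> real"
  assumes "\<And>x y. x \<le> y \<Longrightarrow> h y \<le> h x"
  shows "h \<in> borel_measurable borel"
proof -
  have "mono (\<lambda>x. - h x)" using assms by (auto simp: mono_def)
  then have "(\<lambda>x. - h x) \<in> borel_measurable borel" by (rule borel_measurable_mono)
  then have "(\<lambda>x. - (- h x)) \<in> borel_measurable borel" by measurable
  then show ?thesis by simp
qed

lemma dy_fmeas: "I \<in> dyadic_lattice \<Longrightarrow> I \<in> fmeasurable lborel"
  by (auto simp: dyadic_lattice_iff dy_emeasure intro!: fmeasurableI)

lemma sub_fmeas: "I \<in> dyadic_lattice \<Longrightarrow> B \<subseteq> I \<Longrightarrow> B \<in> sets lborel \<Longrightarrow> B \<in> fmeasurable lborel"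
  using dy_fmeas fmeasurableI2 by blast

lemma sub_emeasure: "I \<in> dyadic_lattice \<Longrightarrow> B \<subseteq> I \<Longrightarrow> B \<in> sets lborel \<Longrightarrow> emeasure lborel B = ennreal (measure lborel B)"
  using sub_fmeas by (simp add: emeasure_eq_measure2)

lemma len_eq_measure: "len I = measure lborel I"
  by (simp add: len_def)

lemma distN_mono:
  assumes "is_weight w" "I \<in> dyadic_lattice" "t \<le> t'"
  shows "distN w I t' \<le> distN w I t"
proof -
  have wm[measurable]: "w \<in> borel_measurable borel" using weight_meas[OF assms(1)] .
  have I[measurable]: "I \<in> sets borel" using dy_sets'[OF assms(2)] by simp
  have "measure lborel {x\<in>I. w x > t'} \<le> measure lborel {x\<in>I. w x > t}"
    using assms(3) by (intro measure_mono_fmeasurable sub_fmeas[OF assms(2)]) auto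
  then show ?thesis unfolding distN_def using dy_len_pos[OF assms(2)] by (intro divide_right_mono) auto
qed

lemma distN_range:
  assumes "is_weight w" "I \<in> dyadic_lattice"
  shows "0 \<le> distN w I t" "distN w I t \<le> 1"
proof -
  have wm[measurable]: "w \<in> borel_measurable borel" using weight_meas[OF assms(1)] .
  have I[measurable]: "I \<in> sets borel" using dy_sets'[OF assms(2)] by simp
  have lp: "len I > 0" using dy_len_pos[OF assms(2)] .
  show "0 \<le> distN w I t" unfolding distN_def using lp by simp
  have "measure lborel {x\<in>I. w x > t} \<le> measure lborel I"
    by (intro measure_mono_fmeasurable dy_fmeas[OF assms(2)]) auto
  then show "distN w I t \<le> 1" unfolding distN_def using lp by (simp add: len_def)
qed

lemma distN_meas:
  assumes "is_weight w" "I \<in> dyadic_lattice"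
  shows "distN w I \<in> borel_measurable borel"
  by (rule antimono_meas) (rule distN_mono[OF assms])

lemma emeasure_distN:
  assumes "is_weight w" "I \<in> dyadic_lattice"
  shows "emeasure lborel {x\<in>I. w x > t} = ennreal (len I * distN w I t)"
proof -
  have wm[measurable]: "w \<in> borel_measurable borel" using weight_meas[OF assms(1)] .
  have I[measurable]: "I \<in> sets borel" using dy_sets'[OF assms(2)] by simp
  have lp: "len I > 0" using dy_len_pos[OF assms(2)] .
  have "emeasure lborel {x\<in>I. w x > t} = ennreal (measure lborel {x\<in>I. w x > t})"
    by (rule sub_emeasure[OF assms(2)]) auto
  then show ?thesis unfolding distN_def using lp by simp
qed

context
  fixes \<Psi> :: "real \<Rightarrow> real"
  assumes Psi_pos: "\<forall>s\<in>{0<..1}. \<Psi> s > 0"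
    and Psi_decr: "antimono_on {0<..1} \<Psi>"
    and sPsi_incr: "mono_on {0<..1} (\<lambda>s. s * \<Psi> s)"
begin

lemma Psi_le: "0 < s \<Longrightarrow> s \<le> s' \<Longrightarrow> s' \<le> 1 \<Longrightarrow> \<Psi> s' \<le> \<Psi> s"
  using Psi_decr unfolding monotone_on_def by auto

lemma sPsi_le: "0 < s \<Longrightarrow> s \<le> s' \<Longrightarrow> s' \<le> 1 \<Longrightarrow> s * \<Psi> s \<le> s' * \<Psi> s'"
  using sPsi_incr unfolding monotone_on_def by auto

lemma g1_mono: "0 \<le> s \<Longrightarrow> s \<le> s' \<Longrightarrow> s' \<le> 1 \<Longrightarrow> s * \<Psi> s \<le> s' * \<Psi> s'"
proof (cases "s = 0")
  case True
  assume "s \<le> s'" "s' \<le> 1"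
  then show ?thesis using True Psi_pos by (cases "s' = 0") (auto intro!: less_imp_le)
next
  case False
  assume "0 \<le> s" "s \<le> s'" "s' \<le> 1"
  then show ?thesis using False sPsi_le by simp
qed

lemma g2_mono: "0 \<le> s \<Longrightarrow> s \<le> s' \<Longrightarrow> s' \<le> 1 \<Longrightarrow> s / \<Psi> s \<le> s' / \<Psi> s'"
proof (cases "s = 0")
  case True
  assume "s \<le> s'" "s' \<le> 1"
  then show ?thesis using True Psi_pos by (cases "s' = 0") (auto intro!: less_imp_le)
next
  case False
  assume a: "0 \<le> s" "s \<le> s'" "s' \<le> 1"
  then have p: "\<Psi> s > 0" "\<Psi> s' > 0" "\<Psi> s' \<le> \<Psi> s" using False Psi_pos Psi_le by auto
  have "s / \<Psi> s \<le> s' / \<Psi> s" using a p by (intro divide_right_mono) auto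
  also have "\<dots> \<le> s' / \<Psi> s'" using a p False by (intro divide_left_mono) auto
  finally show ?thesis .
qed

lemma comp_meas:
  fixes g :: "real \<Rightarrow> real"
  assumes "is_weight w" "I \<in> dyadic_lattice"
    and gm: "\<And>s s'. 0 \<le> s \<Longrightarrow> s \<le> s' \<Longrightarrow> s' \<le> 1 \<Longrightarrow> g s \<le> g s'"
  shows "(\<lambda>t. g (distN w I t)) \<in> borel_measurable borel"
  by (rule antimono_meas) (intro gm distN_mono[OF assms(1,2)] distN_range[OF assms(1,2)])

definition q where "q l = (if l \<in> {0<..1} then 1 / \<Psi> l else 0)"

lemma q_meas: "q \<in> borel_measurable borel"
proof (rule borel_measurable_piecewise_mono[of "{{..0}, {0<..1}, {1<..}}"])
  show "countable {{..0::real}, {0<..1}, {1<..}}" by simp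
  show "\<And>c. c \<in> {{..0::real}, {0<..1}, {1<..}} \<Longrightarrow> c \<in> sets borel" by auto
  show "\<Union>{{..0::real}, {0<..1}, {1<..}} = UNIV" by auto
  fix c assume "c \<in> {{..0::real}, {0<..1}, {1<..}}"
  moreover have "mono_on {..0} q" by (auto simp: q_def monotone_on_def)
  moreover have "mono_on {1<..} q" by (auto simp: q_def monotone_on_def)
  moreover have "mono_on {0<..1} q"
  proof (rule mono_onI)
    fix r s :: real assume "r \<in> {0<..1}" "s \<in> {0<..1}" "r \<le> s"
    then show "q r \<le> q s" using Psi_pos Psi_le[of r s] by (auto simp: q_def intro!: divide_left_mono)
  qed
  ultimately show "mono_on c q" by auto
qed

lemma q_nn: "q l \<ge> 0"
  using Psi_pos by (auto simp: q_def less_imp_le)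

lemma phi_bound:
  assumes "0 \<le> s" "s \<le> 1"
  shows "ennreal (s / \<Psi> s) \<le> 4 * (\<integral>\<^sup>+ l. ennreal (q l) * indicator {0<..<s} l \<partial>lborel)"
proof (cases "s = 0")
  case True then show ?thesis by simp
next
  case False
  then have s: "s > 0" using assms by simp
  have ps: "\<Psi> s > 0" using Psi_pos s assms by auto
  have "(\<integral>\<^sup>+ l. ennreal (1 / (2 * \<Psi> s)) * indicator {s/2..<s} l \<partial>lborel) \<le> (\<integral>\<^sup>+ l. ennreal (q l) * indicator {0<..<s} l \<partial>lborel)"
  proof (rule nn_integral_mono)
    fix l
    show "ennreal (1 / (2 * \<Psi> s)) * indicator {s/2..<s} l \<le> ennreal (q l) * indicator {0<..<s} l"
    proof (cases "l \<in> {s/2..<s}")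
      case True
      then have l: "0 < l" "l < s" "s/2 \<le> l" using s by auto
      have pl: "\<Psi> l > 0" using Psi_pos l assms by auto
      have "l * \<Psi> l \<le> s * \<Psi> s" using sPsi_le[of l s] l assms by simp
      then have "\<Psi> l \<le> s * \<Psi> s / l" using l by (simp add: field_simps)
      also have "\<dots> \<le> 2 * \<Psi> s" using l ps by (simp add: field_simps)
      finally have "1 / (2 * \<Psi> s) \<le> 1 / \<Psi> l" using pl by (intro divide_left_mono) auto
      moreover have "q l = 1 / \<Psi> l" using l assms by (simp add: q_def)
      ultimately show ?thesis using True l by (simp add: ennreal_leI)
    qed simp
  qed
  also have "(\<integral>\<^sup>+ l. ennreal (1 / (2 * \<Psi> s)) * indicator {s/2..<s} l \<partial>lborel) = ennreal (1 / (2 * \<Psi> s)) * ennreal (s/2)"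
    using s by (simp add: nn_integral_cmult_indicator)
  finally have "ennreal (1 / (2 * \<Psi> s)) * ennreal (s/2) \<le> (\<integral>\<^sup>+ l. ennreal (q l) * indicator {0<..<s} l \<partial>lborel)" .
  moreover have "ennreal (s / \<Psi> s) = 4 * (ennreal (1 / (2 * \<Psi> s)) * ennreal (s/2))"
    using s ps by (simp add: ennreal_mult'[symmetric] field_simps ennreal_numeral[symmetric] del: ennreal_numeral)
  ultimately show ?thesis by (simp add: mult_left_mono)
qed

end


lemma dy_fmeas': "I \<in> dyadic_lattice \<Longrightarrow> I \<in> fmeasurable lborel"
  by (auto simp: dyadic_lattice_iff dy_emeasure intro!: fmeasurableI)

lemma carleson_finite:
  assumes "carleson_seq \<alpha> C1" "Q \<in> dyadic_lattice" "finite G" "G \<subseteq> {I\<in>dyadic_lattice. I \<subseteq> Q}"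
  shows "(\<Sum>I'\<in>G. ennreal (\<alpha> I' * len I')) \<le> ennreal (C1 * len Q)"
proof -
  have "(\<Sum>I'\<in>G. ennreal (\<alpha> I' * len I')) \<le> (\<Sum>\<^sub>\<infinity> I' \<in> {I\<in>dyadic_lattice. I \<subseteq> Q}. ennreal (\<alpha> I' * len I'))"
  proof -
    have "infsum (\<lambda>I'. ennreal (\<alpha> I' * len I')) G \<le> infsum (\<lambda>I'. ennreal (\<alpha> I' * len I')) {I\<in>dyadic_lattice. I \<subseteq> Q}"
    proof (rule infsum_mono_neutral)
      show "(\<lambda>I'. ennreal (\<alpha> I' * len I')) summable_on G" by (rule nonneg_summable_on_complete) simp
      show "(\<lambda>I'. ennreal (\<alpha> I' * len I')) summable_on {I\<in>dyadic_lattice. I \<subseteq> Q}" by (rule nonneg_summable_on_complete) simp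
      show "\<And>x. x \<in> G - {I\<in>dyadic_lattice. I \<subseteq> Q} \<Longrightarrow> ennreal (\<alpha> x * len x) \<le> 0" using assms(4) by blast
    qed auto
    then show ?thesis using assms(3) by simp
  qed
  also have "\<dots> \<le> ennreal (C1 * len Q)" using assms(1,2) unfolding carleson_seq_def by blast
  finally show ?thesis .
qed

lemma K3:
  assumes carl: "carleson_seq \<alpha> C1" and C1: "C1 \<ge> 0"
    and I: "I \<in> dyadic_lattice" and F: "finite F" "F \<subseteq> {I'\<in>dyadic_lattice. I' \<subseteq> I}"
    and E: "E \<in> sets lborel" and l: "l > 0"
  shows "(\<Sum>I'\<in>{I'\<in>F. l < measure lborel (I' \<inter> E) / len I'}. ennreal (\<alpha> I' * len I'))
          \<le> ennreal (C1 / l) * emeasure lborel (I \<inter> E)"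
proof -
  define G where "G = {I'\<in>F. l < measure lborel (I' \<inter> E) / len I'}"
  define Q where "Q = {Q\<in>G. \<forall>Q'\<in>G. Q \<subseteq> Q' \<longrightarrow> Q' = Q}"
  have fG: "finite G" using F by (simp add: G_def)
  have GF: "G \<subseteq> F" by (auto simp: G_def)
  have QG: "Q \<subseteq> G" by (auto simp: Q_def)
  have fQ: "finite Q" using fG QG finite_subset by blast
  have Gdy: "I' \<in> dyadic_lattice" "I' \<subseteq> I" if "I' \<in> G" for I' using that GF F by auto
  have cover: "\<exists>Q0\<in>Q. I' \<subseteq> Q0" if IG: "I' \<in> G" for I'
  proof -
    obtain m where m: "m \<in> G" "I' \<subseteq> m" "\<forall>b\<in>G. m \<subseteq> b \<longrightarrow> m = b"
      using finite_has_maximal2[OF fG IG] by auto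
    then have "m \<in> Q" by (auto simp: Q_def)
    then show ?thesis using m by auto
  qed
  have disj: "Q1 \<inter> Q2 = {}" if "Q1 \<in> Q" "Q2 \<in> Q" "Q1 \<noteq> Q2" for Q1 Q2
  proof -
    have "Q1 \<in> dyadic_lattice" "Q2 \<in> dyadic_lattice" using that QG Gdy by auto
    then have "Q1 \<subseteq> Q2 \<or> Q2 \<subseteq> Q1 \<or> Q1 \<inter> Q2 = {}" by (rule dy_nest_or_disj)
    moreover have "\<forall>Q'\<in>G. Q1 \<subseteq> Q' \<longrightarrow> Q' = Q1" "\<forall>Q'\<in>G. Q2 \<subseteq> Q' \<longrightarrow> Q' = Q2" "Q1 \<in> G" "Q2 \<in> G"
      using that(1,2) unfolding Q_def by blast+
    ultimately show ?thesis using that(3) by blast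
  qed
  define A where "A Q0 = {I'\<in>G. I' \<subseteq> Q0}" for Q0
  have GU: "G = \<Union>(A ` Q)"
  proof (intro equalityI subsetI)
    fix I' assume "I' \<in> G"
    then obtain Q0 where "Q0 \<in> Q" "I' \<subseteq> Q0" using cover by blast
    then show "I' \<in> \<Union>(A ` Q)" using \<open>I' \<in> G\<close> unfolding A_def by blast
  next
    fix I' assume "I' \<in> \<Union>(A ` Q)"
    then show "I' \<in> G" unfolding A_def by blast
  qed
  have Adisj: "\<forall>i\<in>Q. \<forall>j\<in>Q. i \<noteq> j \<longrightarrow> A i \<inter> A j = {}"
  proof (intro ballI impI)
    fix i j assume ij: "i \<in> Q" "j \<in> Q" "i \<noteq> j"
    { fix I' assume "I' \<in> A i" "I' \<in> A j"
      then have "I' \<subseteq> i \<inter> j" "I' \<in> dyadic_lattice" using Gdy by (auto simp: A_def)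
      then have False using disj[OF ij] dy_ne by auto }
    then show "A i \<inter> A j = {}" by blast
  qed
  have "(\<Sum>I'\<in>G. ennreal (\<alpha> I' * len I')) = (\<Sum>Q0\<in>Q. \<Sum>I'\<in>A Q0. ennreal (\<alpha> I' * len I'))"
  proof -
    have fA: "\<forall>i\<in>Q. finite (A i)" using fG by (simp add: A_def)
    show ?thesis unfolding GU by (rule sum.UNION_disjoint[OF fQ fA Adisj])
  qed
  also have "\<dots> \<le> (\<Sum>Q0\<in>Q. ennreal (C1 / l) * emeasure lborel (Q0 \<inter> E))"
  proof (rule sum_mono)
    fix Q0 assume "Q0 \<in> Q"
    then have Q0: "Q0 \<in> G" "Q0 \<in> dyadic_lattice" using QG Gdy by auto
    have lp: "len Q0 > 0" using dy_len_pos[OF Q0(2)] .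
    have "(\<Sum>I'\<in>A Q0. ennreal (\<alpha> I' * len I')) \<le> ennreal (C1 * len Q0)"
    proof (rule carleson_finite[OF carl Q0(2)])
      show "finite (A Q0)" using fG by (simp add: A_def)
      show "A Q0 \<subseteq> {I \<in> dyadic_lattice. I \<subseteq> Q0}" using Gdy by (auto simp: A_def)
    qed
    also have "C1 * len Q0 \<le> (C1 / l) * measure lborel (Q0 \<inter> E)"
    proof -
      have "l < measure lborel (Q0 \<inter> E) / len Q0" using Q0(1) by (simp add: G_def)
      then have "l * len Q0 < measure lborel (Q0 \<inter> E)" using lp by (simp add: field_simps)
      then have "len Q0 \<le> measure lborel (Q0 \<inter> E) / l" using l by (simp add: field_simps)
      then have "C1 * len Q0 \<le> C1 * (measure lborel (Q0 \<inter> E) / l)" using C1 by (rule mult_left_mono)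
      then show ?thesis by simp
    qed
    then have "ennreal (C1 * len Q0) \<le> ennreal ((C1 / l) * measure lborel (Q0 \<inter> E))" by (rule ennreal_leI)
    also have "\<dots> = ennreal (C1 / l) * emeasure lborel (Q0 \<inter> E)"
    proof -
      have s1: "Q0 \<inter> E \<subseteq> Q0" by blast
      have s2: "Q0 \<inter> E \<in> sets lborel" using dy_sets'[OF Q0(2)] E by (rule sets.Int)
      have "Q0 \<inter> E \<in> fmeasurable lborel" by (rule fmeasurableI2[OF dy_fmeas'[OF Q0(2)] s1 s2])
      then have "emeasure lborel (Q0 \<inter> E) = ennreal (measure lborel (Q0 \<inter> E))"
        by (simp add: emeasure_eq_measure2)
      moreover have "ennreal ((C1 / l) * measure lborel (Q0 \<inter> E)) = ennreal (C1 / l) * ennreal (measure lborel (Q0 \<inter> E))"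
        using C1 l by (intro ennreal_mult) auto
      ultimately show ?thesis by simp
    qed
    finally show "(\<Sum>I'\<in>A Q0. ennreal (\<alpha> I' * len I')) \<le> ennreal (C1 / l) * emeasure lborel (Q0 \<inter> E)" .
  qed
  also have "\<dots> = ennreal (C1 / l) * emeasure lborel (\<Union>Q0\<in>Q. Q0 \<inter> E)"
  proof -
    have "(\<Sum>Q0\<in>Q. emeasure lborel (Q0 \<inter> E)) = emeasure lborel (\<Union>Q0\<in>Q. Q0 \<inter> E)"
    proof (rule sum_emeasure)
      show "(\<lambda>Q0. Q0 \<inter> E) ` Q \<subseteq> sets lborel"
      proof (rule image_subsetI)
        fix Q0 assume "Q0 \<in> Q"
        then have "Q0 \<in> dyadic_lattice" using QG Gdy by blast
        then show "Q0 \<inter> E \<in> sets lborel" using E dy_sets' by (intro sets.Int)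
      qed
      show "disjoint_family_on (\<lambda>Q0. Q0 \<inter> E) Q" unfolding disjoint_family_on_def
      proof (intro ballI impI)
        fix m n assume "m \<in> Q" "n \<in> Q" "m \<noteq> n"
        then have "m \<inter> n = {}" by (rule disj)
        then show "(m \<inter> E) \<inter> (n \<inter> E) = {}" by blast
      qed
    qed (rule fQ)
    then show ?thesis unfolding sum_distrib_left[symmetric] by simp
  qed
  also have "\<dots> \<le> ennreal (C1 / l) * emeasure lborel (I \<inter> E)"
  proof (intro mult_left_mono emeasure_mono)
    have "\<forall>Q0\<in>Q. Q0 \<subseteq> I" using QG Gdy(2) by blast
    then show "(\<Union>Q0\<in>Q. Q0 \<inter> E) \<subseteq> I \<inter> E" by blast
    show "I \<inter> E \<in> sets lborel" using dy_sets'[OF I] E by simp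
  qed simp
  finally show ?thesis unfolding G_def .
qed


context
  fixes \<Psi> :: "real \<Rightarrow> real"
  assumes Psi_pos: "\<forall>s\<in>{0<..1}. \<Psi> s > 0"
    and Psi_decr: "antimono_on {0<..1} \<Psi>"
    and sPsi_incr: "mono_on {0<..1} (\<lambda>s. s * \<Psi> s)"
begin

lemmas phiB = phi_bound[OF Psi_pos Psi_decr sPsi_incr]
lemmas qM = q_meas[OF Psi_pos Psi_decr sPsi_incr]
lemmas qN = q_nn[OF Psi_pos Psi_decr sPsi_incr]
lemmas qD = q_def[OF Psi_pos Psi_decr sPsi_incr]

lemma key:
  assumes carl: "carleson_seq \<alpha> C1" and C1: "C1 \<ge> 0"
    and I: "I \<in> dyadic_lattice" and F: "finite F" "F \<subseteq> {I'\<in>dyadic_lattice. I' \<subseteq> I}"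
    and E: "E \<in> sets lborel"
  shows "(\<Sum>I'\<in>F. ennreal (\<alpha> I' * len I') * ennreal (measure lborel (I' \<inter> E) / len I' / \<Psi> (measure lborel (I' \<inter> E) / len I')))
     \<le> ennreal (4 * C1) * (\<integral>\<^sup>+ s\<in>{0<..1}. ennreal (1 / (s * \<Psi> s)) \<partial>lborel) * emeasure lborel (I \<inter> E)"
proof -
  define N where "N I' = measure lborel (I' \<inter> E) / len I'" for I'
  define c where "c I' = ennreal (\<alpha> I' * len I')" for I'
  define X where "X = emeasure lborel (I \<inter> E)"
  define Kint where "Kint = (\<integral>\<^sup>+ s\<in>{0<..1}. ennreal (1 / (s * \<Psi> s)) \<partial>lborel)"
  have Fdy: "I' \<in> dyadic_lattice" if "I' \<in> F" for I' using that F by auto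
  have Nr: "0 \<le> N I'" "N I' \<le> 1" if "I' \<in> F" for I'
  proof -
    have lp: "len I' > 0" using dy_len_pos[OF Fdy[OF that]] .
    show "0 \<le> N I'" unfolding N_def using lp by simp
    have "measure lborel (I' \<inter> E) \<le> measure lborel I'"
      using E dy_sets'[OF Fdy[OF that]] by (intro measure_mono_fmeasurable dy_fmeas[OF Fdy[OF that]]) auto
    then show "N I' \<le> 1" unfolding N_def using lp by (simp add: len_def)
  qed
  define h where "h I' l = ennreal (q \<Psi> l) * indicator {0<..<N I'} l" for I' l
  have hm: "h I' \<in> borel_measurable lborel" for I'
    unfolding h_def using qM by measurable
  have "(\<Sum>I'\<in>F. c I' * ennreal (N I' / \<Psi> (N I'))) \<le> (\<Sum>I'\<in>F. c I' * (4 * integral\<^sup>N lborel (h I')))"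
    unfolding h_def using Nr by (intro sum_mono mult_left_mono phiB) auto
  also have "\<dots> = 4 * (\<integral>\<^sup>+ l. (\<Sum>I'\<in>F. c I' * h I' l) \<partial>lborel)"
  proof -
    have "(\<integral>\<^sup>+ l. (\<Sum>I'\<in>F. c I' * h I' l) \<partial>lborel) = (\<Sum>I'\<in>F. (\<integral>\<^sup>+ l. c I' * h I' l \<partial>lborel))"
      using hm by (intro nn_integral_sum) auto
    also have "\<dots> = (\<Sum>I'\<in>F. c I' * integral\<^sup>N lborel (h I'))"
      using hm by (intro sum.cong refl nn_integral_cmult) auto
    finally show ?thesis by (simp add: sum_distrib_left mult.left_commute)
  qed
  also have "(\<integral>\<^sup>+ l. (\<Sum>I'\<in>F. c I' * h I' l) \<partial>lborel) \<le> (\<integral>\<^sup>+ l. ennreal C1 * X * ennreal (q \<Psi> l / l) \<partial>lborel)"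
  proof (rule nn_integral_mono)
    fix l :: real
    show "(\<Sum>I'\<in>F. c I' * h I' l) \<le> ennreal C1 * X * ennreal (q \<Psi> l / l)"
    proof (cases "l \<in> {0<..1}")
      case False
      then have qz: "q \<Psi> l = 0" unfolding qD by auto
      show ?thesis by (simp add: h_def qz)
    next
      case True
      then have l: "l > 0" by simp
      have "(\<Sum>I'\<in>F. c I' * h I' l) = ennreal (q \<Psi> l) * (\<Sum>I'\<in>F. if l < N I' then c I' else 0)"
        unfolding sum_distrib_left using l by (intro sum.cong refl) (auto simp: h_def indicator_def mult.commute)
      also have "(\<Sum>I'\<in>F. if l < N I' then c I' else 0) = (\<Sum>I'\<in>{I'\<in>F. l < N I'}. c I')"
        using F by (simp add: sum.inter_filter)
      also have "\<dots> \<le> ennreal (C1 / l) * X"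
        unfolding c_def N_def X_def by (rule K3[OF carl C1 I F E l])
      finally have "(\<Sum>I'\<in>F. c I' * h I' l) \<le> ennreal (q \<Psi> l) * (ennreal (C1 / l) * X)"
        by (simp add: mult_left_mono)
      also have "\<dots> = ennreal C1 * X * ennreal (q \<Psi> l / l)"
      proof -
        have "ennreal (q \<Psi> l) * ennreal (C1 / l) = ennreal C1 * ennreal (q \<Psi> l / l)"
          using qN C1 l by (simp add: ennreal_mult[symmetric] mult.commute)
        then show ?thesis by (simp add: mult_ac)
      qed
      finally show ?thesis .
    qed
  qed
  also have "(\<integral>\<^sup>+ l. ennreal C1 * X * ennreal (q \<Psi> l / l) \<partial>lborel) = ennreal C1 * X * (\<integral>\<^sup>+ l. ennreal (q \<Psi> l / l) \<partial>lborel)"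
  proof (rule nn_integral_cmult)
    have "(\<lambda>l. q \<Psi> l / l) \<in> borel_measurable borel" using qM by (intro borel_measurable_divide) auto
    then show "(\<lambda>l. ennreal (q \<Psi> l / l)) \<in> borel_measurable lborel" by simp
  qed
  also have "(\<integral>\<^sup>+ l. ennreal (q \<Psi> l / l) \<partial>lborel) = Kint"
  proof -
    have qq: "ennreal (q \<Psi> l / l) = ennreal (1 / (l * \<Psi> l)) * indicator {0<..1} l" for l
    proof (cases "l \<in> {0<..1}")
      case True then show ?thesis unfolding qD by (simp add: mult.commute)
    next
      case False then show ?thesis unfolding qD by auto
    qed
    show ?thesis unfolding Kint_def qq ..
  qed
  finally have "(\<Sum>I'\<in>F. c I' * ennreal (N I' / \<Psi> (N I'))) \<le> 4 * (ennreal C1 * X * Kint)"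
    by (simp add: mult_left_mono)
  also have "\<dots> = ennreal (4 * C1) * Kint * X"
    using C1 by (simp add: ennreal_mult mult_ac)
  finally show ?thesis unfolding c_def N_def X_def Kint_def .
qed


lemma amgm_pt:
  fixes c N :: real
  assumes "0 \<le> N" "N \<le> 1" "c \<ge> 0"
  shows "2 * c * N \<le> c^2 * (N * \<Psi> N) + N / \<Psi> N"
proof (cases "N = 0")
  case True then show ?thesis by simp
next
  case False
  then have N: "N > 0" using assms by simp
  have p: "\<Psi> N > 0" using Psi_pos N assms by auto
  have "0 \<le> N * (c * \<Psi> N - 1)^2 / \<Psi> N" using N p by simp
  also have "N * (c * \<Psi> N - 1)^2 / \<Psi> N = c^2 * (N * \<Psi> N) + N / \<Psi> N - 2 * c * N"
    using p by (simp add: field_simps power2_eq_square)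
  finally show ?thesis by simp
qed

lemma amgm_interval:
  assumes w: "is_weight w" and I: "I \<in> dyadic_lattice" and fin: "nPsi \<Psi> (distN w I) < \<infinity>"
  shows "ennreal ((set_lebesgue_integral lborel I w)^2 / (len I * enn2real (nPsi \<Psi> (distN w I))))
     \<le> ennreal (len I) * (\<integral>\<^sup>+ t\<in>{0<..}. ennreal (distN w I t / \<Psi> (distN w I t)) \<partial>lborel)"
proof -
  define N where "N = distN w I"
  define \<mu> where "\<mu> = set_lebesgue_integral lborel I w"
  define n where "n = nPsi \<Psi> N"
  define m where "m = (\<integral>\<^sup>+ t\<in>{0<..}. ennreal (N t / \<Psi> (N t)) \<partial>lborel)"
  define A where "A = (\<integral>\<^sup>+ t\<in>{0<..}. ennreal (N t) \<partial>lborel)"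
  have lp: "len I > 0" using dy_len_pos[OF I] .
  have Nr: "0 \<le> N t" "N t \<le> 1" for t unfolding N_def using distN_range[OF w I] by auto
  have Nm: "N \<in> borel_measurable borel" unfolding N_def by (rule distN_meas[OF w I])
  have g1m: "(\<lambda>t. N t * \<Psi> (N t)) \<in> borel_measurable borel"
    unfolding N_def by (rule comp_meas[OF Psi_pos Psi_decr sPsi_incr w I]) (rule g1_mono[OF Psi_pos Psi_decr sPsi_incr])
  have g2m: "(\<lambda>t. N t / \<Psi> (N t)) \<in> borel_measurable borel"
    unfolding N_def by (rule comp_meas[OF Psi_pos Psi_decr sPsi_incr w I]) (rule g2_mono[OF Psi_pos Psi_decr sPsi_incr])
  have indm[measurable]: "{0::real<..} \<in> sets lborel" by simp
  have Nm'[measurable]: "N \<in> borel_measurable lborel" using Nm by simp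
  have g1m'[measurable]: "(\<lambda>t. N t * \<Psi> (N t)) \<in> borel_measurable lborel" using g1m by simp
  have g2m'[measurable]: "(\<lambda>t. N t / \<Psi> (N t)) \<in> borel_measurable lborel" using g2m by simp
  have mu_nn: "\<mu> \<ge> 0" unfolding \<mu>_def using weight_nn[OF w] by (intro setint_nonneg) auto
  have n_eq: "n = (\<integral>\<^sup>+ t\<in>{0<..}. ennreal (N t * \<Psi> (N t)) \<partial>lborel)"
    unfolding n_def nPsi_def by (intro nn_integral_cong) auto
  have A_eq: "ennreal (len I) * A = ennreal \<mu>"
  proof -
    have "ennreal \<mu> = (\<integral>\<^sup>+ t\<in>{0<..}. emeasure lborel {x\<in>I. w x > t} \<partial>lborel)"
      unfolding \<mu>_def by (rule layer_cake[OF w I, symmetric])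
    also have "\<dots> = (\<integral>\<^sup>+ t. ennreal (len I) * (ennreal (N t) * indicator {0<..} t) \<partial>lborel)"
      unfolding N_def using lp distN_range[OF w I]
      by (intro nn_integral_cong) (simp add: emeasure_distN[OF w I] ennreal_mult mult.assoc)
    also have "\<dots> = ennreal (len I) * A"
      unfolding A_def using Nm by (intro nn_integral_cmult) measurable
    finally show ?thesis ..
  qed
  have main: "ennreal (2 * c) * A \<le> ennreal (c^2) * n + m" if c: "c \<ge> 0" for c
  proof -
    have "ennreal (2 * c) * A = (\<integral>\<^sup>+ t. ennreal (2 * c) * (ennreal (N t) * indicator {0<..} t) \<partial>lborel)"
      unfolding A_def using Nm by (intro nn_integral_cmult[symmetric]) measurable
    also have "\<dots> \<le> (\<integral>\<^sup>+ t. ennreal (c^2) * (ennreal (N t * \<Psi> (N t)) * indicator {0<..} t) + ennreal (N t / \<Psi> (N t)) * indicator {0<..} t \<partial>lborel)"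
    proof (rule nn_integral_mono)
      fix t
      have pos1: "N t * \<Psi> (N t) \<ge> 0"
        using g1_mono[OF Psi_pos Psi_decr sPsi_incr, of 0 "N t"] Nr[of t] by simp
      have pos2: "N t / \<Psi> (N t) \<ge> 0"
        using g2_mono[OF Psi_pos Psi_decr sPsi_incr, of 0 "N t"] Nr[of t] by simp
      have "ennreal (2 * c * N t) \<le> ennreal (c^2 * (N t * \<Psi> (N t)) + N t / \<Psi> (N t))"
        using amgm_pt[OF Nr c] by (rule ennreal_leI)
      also have "\<dots> = ennreal (c^2 * (N t * \<Psi> (N t))) + ennreal (N t / \<Psi> (N t))"
        using pos1 pos2 by (intro ennreal_plus) auto
      also have "ennreal (c^2 * (N t * \<Psi> (N t))) = ennreal (c^2) * ennreal (N t * \<Psi> (N t))"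
        using pos1 by (intro ennreal_mult) auto
      also have "ennreal (2 * c * N t) = ennreal (2 * c) * ennreal (N t)"
        using c Nr[of t] by (intro ennreal_mult) auto
      finally have "ennreal (2 * c) * ennreal (N t) \<le> ennreal (c^2) * ennreal (N t * \<Psi> (N t)) + ennreal (N t / \<Psi> (N t))" .
      then show "ennreal (2 * c) * (ennreal (N t) * indicator {0<..} t) \<le> ennreal (c^2) * (ennreal (N t * \<Psi> (N t)) * indicator {0<..} t) + ennreal (N t / \<Psi> (N t)) * indicator {0<..} t"
        by (cases "t > 0") (auto simp: indicator_def)
    qed
    also have "\<dots> = (\<integral>\<^sup>+ t. ennreal (c^2) * (ennreal (N t * \<Psi> (N t)) * indicator {0<..} t) \<partial>lborel) + m"
      unfolding m_def using g1m g2m by (intro nn_integral_add) measurable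
    also have "(\<integral>\<^sup>+ t. ennreal (c^2) * (ennreal (N t * \<Psi> (N t)) * indicator {0<..} t) \<partial>lborel) = ennreal (c^2) * n"
      unfolding n_eq using g1m by (intro nn_integral_cmult) measurable
    finally show ?thesis .
  qed
  show ?thesis
  proof (cases "\<mu> = 0 \<or> enn2real n = 0 \<or> m = \<infinity>")
    case True
    then show ?thesis
    proof (elim disjE)
      assume "\<mu> = 0" then show ?thesis by (simp add: \<mu>_def)
    next
      assume "enn2real n = 0" then show ?thesis by (simp add: n_def N_def)
    next
      assume "m = \<infinity>" then show ?thesis using lp by (simp add: m_def N_def ennreal_mult_top)
    qed
  next
    case False
    have a: "\<mu> \<noteq> 0" "enn2real n \<noteq> 0" "m \<noteq> \<infinity>" using False by auto
    have mu: "\<mu> > 0" using a(1) mu_nn by simp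
    have "enn2real n \<ge> 0" by simp
    then have nr: "enn2real n > 0" using a(2) by linarith
    have mf: "m < \<infinity>" using a(3) by (simp add: less_top)
    define nr where "nr = enn2real n"
    define mr where "mr = enn2real m"
    have n_e: "n = ennreal nr" unfolding nr_def using fin by (simp add: n_def N_def ennreal_enn2real less_top)
    have m_e: "m = ennreal mr" unfolding mr_def using mf by (simp add: ennreal_enn2real less_top)
    have mr0: "mr \<ge> 0" unfolding mr_def by simp
    define ar where "ar = \<mu> / len I"
    have ar0: "ar > 0" unfolding ar_def using mu lp by simp
    have A_e: "A = ennreal ar"
    proof -
      have At: "A \<noteq> \<infinity>"
      proof
        assume "A = \<infinity>"
        then have "ennreal (len I) * A = \<infinity>" using lp by (simp add: ennreal_mult_top)
        then show False using A_eq by simp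
      qed
      define a where "a = enn2real A"
      have Aa: "A = ennreal a" unfolding a_def using At by (simp add: ennreal_enn2real less_top)
      have a0: "a \<ge> 0" unfolding a_def by simp
      have "ennreal (len I * a) = ennreal \<mu>"
        using A_eq Aa lp a0 by (simp add: ennreal_mult)
      then have "len I * a = \<mu>" using lp a0 mu_nn by (simp add: ennreal_inj)
      then have "a = ar" unfolding ar_def using lp by (simp add: field_simps)
      then show ?thesis using Aa by simp
    qed
    define c where "c = ar / nr"
    have c0: "c \<ge> 0" unfolding c_def using ar0 nr nr_def by simp
    have "ennreal (2 * c) * ennreal ar \<le> ennreal (c^2) * ennreal nr + ennreal mr"
      using main[OF c0] A_e n_e m_e by simp
    moreover have "ennreal (2 * c) * ennreal ar = ennreal (2 * c * ar)"
      using c0 ar0 by (intro ennreal_mult[symmetric]) auto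
    moreover have "ennreal (c^2) * ennreal nr + ennreal mr = ennreal (c^2 * nr + mr)"
    proof -
      have "ennreal (c^2) * ennreal nr = ennreal (c^2 * nr)" using nr nr_def by (intro ennreal_mult[symmetric]) auto
      moreover have "ennreal (c^2 * nr) + ennreal mr = ennreal (c^2 * nr + mr)"
        using nr nr_def mr0 by (intro ennreal_plus[symmetric]) auto
      ultimately show ?thesis by simp
    qed
    ultimately have ee: "ennreal (2 * c * ar) \<le> ennreal (c^2 * nr + mr)" by metis
    have y0: "0 \<le> c^2 * nr + mr" using nr nr_def mr0 by simp
    have r: "2 * c * ar \<le> c^2 * nr + mr"
      using ee ennreal_le_iff[OF y0] by blast
    have nrp: "nr > 0" using nr nr_def by simp
    have "2 * ar^2 / nr \<le> ar^2 / nr + mr" using r nrp by (simp add: c_def power2_eq_square field_simps)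
    then have "ar^2 \<le> nr * mr" using nrp by (simp add: field_simps)
    then have "\<mu>^2 / (len I * nr) \<le> len I * mr"
      using lp nrp by (simp add: ar_def field_simps power2_eq_square)
    then have "ennreal (\<mu>^2 / (len I * nr)) \<le> ennreal (len I * mr)" by (rule ennreal_leI)
    also have "\<dots> = ennreal (len I) * m" using lp mr0 m_e by (simp add: ennreal_mult)
    finally show ?thesis unfolding \<mu>_def nr_def n_def m_def N_def .
  qed
qed


lemma beta_carl:
  assumes Kf: "(\<integral>\<^sup>+ s\<in>{0<..1}. ennreal (1 / (s * \<Psi> s)) \<partial>lborel) < \<infinity>"
    and carl: "carleson_seq \<alpha> C1" and C1: "C1 \<ge> 0"
    and w: "is_weight w" and fin: "\<forall>I\<in>dyadic_lattice. nPsi \<Psi> (distN w I) < \<infinity>"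
    and I: "I \<in> dyadic_lattice" and F: "finite F" "F \<subseteq> dyadic_lattice"
  shows "(\<Sum>I'\<in>{I'\<in>F. I' \<subseteq> I}. (set_lebesgue_integral lborel I' w)^2 * \<alpha> I' / (len I' * enn2real (nPsi \<Psi> (distN w I'))))
     \<le> 4 * C1 * enn2real (\<integral>\<^sup>+ s\<in>{0<..1}. ennreal (1 / (s * \<Psi> s)) \<partial>lborel) * set_lebesgue_integral lborel I w"
proof -
  define Kint where "Kint = (\<integral>\<^sup>+ s\<in>{0<..1}. ennreal (1 / (s * \<Psi> s)) \<partial>lborel)"
  define K where "K = enn2real Kint"
  have K_e: "Kint = ennreal K" unfolding K_def using Kf by (simp add: Kint_def ennreal_enn2real less_top)
  have K0: "K \<ge> 0" unfolding K_def by simp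
  define \<mu> where "\<mu> J = set_lebesgue_integral lborel J w" for J
  define nr where "nr J = enn2real (nPsi \<Psi> (distN w J))" for J
  define Fs where "Fs = {I'\<in>F. I' \<subseteq> I}"
  have fFs: "finite Fs" using F by (simp add: Fs_def)
  have Fs_sub: "Fs \<subseteq> {I'\<in>dyadic_lattice. I' \<subseteq> I}" using F by (auto simp: Fs_def)
  have Fsdy: "I' \<in> dyadic_lattice" if "I' \<in> Fs" for I' using that Fs_sub by auto
  have anc: "\<alpha> I' \<ge> 0" if "I' \<in> dyadic_lattice" for I' using carl that unfolding carleson_seq_def by blast
  have mu_nn: "\<mu> J \<ge> 0" for J unfolding \<mu>_def using weight_nn[OF w] by (intro setint_nonneg) auto
  have indm[measurable]: "{0::real<..} \<in> sets lborel" by simp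
  define \<phi> where "\<phi> I' t = ennreal (distN w I' t / \<Psi> (distN w I' t))" for I' t
  have phim: "(\<lambda>t. \<phi> I' t) \<in> borel_measurable lborel" if "I' \<in> dyadic_lattice" for I'
  proof -
    have "(\<lambda>t. distN w I' t / \<Psi> (distN w I' t)) \<in> borel_measurable borel"
      by (rule comp_meas[OF Psi_pos Psi_decr sPsi_incr w that]) (rule g2_mono[OF Psi_pos Psi_decr sPsi_incr])
    then show ?thesis unfolding \<phi>_def by simp
  qed
  have pm: "(\<lambda>t. \<phi> I' t * indicator {0<..} t) \<in> borel_measurable lborel" if "I' \<in> Fs" for I'
    using phim[OF Fsdy[OF that]] by (intro borel_measurable_times_ennreal borel_measurable_indicator) auto
  have tnn: "(\<mu> I')^2 * \<alpha> I' / (len I' * nr I') \<ge> 0" if "I' \<in> Fs" for I'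
    using anc[OF Fsdy[OF that]] dy_len_pos[OF Fsdy[OF that]] by (simp add: nr_def)
  have "ennreal (\<Sum>I'\<in>Fs. (\<mu> I')^2 * \<alpha> I' / (len I' * nr I')) = (\<Sum>I'\<in>Fs. ennreal ((\<mu> I')^2 * \<alpha> I' / (len I' * nr I')))"
    using tnn by (simp add: sum_ennreal)
  also have "\<dots> \<le> (\<Sum>I'\<in>Fs. ennreal (\<alpha> I' * len I') * (\<integral>\<^sup>+ t. \<phi> I' t * indicator {0<..} t \<partial>lborel))"
  proof (rule sum_mono)
    fix I' assume IF: "I' \<in> Fs"
    have dy: "I' \<in> dyadic_lattice" using Fsdy[OF IF] .
    have a0: "\<alpha> I' \<ge> 0" using anc[OF dy] .
    have lp: "len I' > 0" using dy_len_pos[OF dy] .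
    have "ennreal ((\<mu> I')^2 * \<alpha> I' / (len I' * nr I')) = ennreal (\<alpha> I') * ennreal ((\<mu> I')^2 / (len I' * nr I'))"
      using a0 lp by (simp add: ennreal_mult[symmetric] nr_def mult.commute)
    also have "\<dots> \<le> ennreal (\<alpha> I') * (ennreal (len I') * (\<integral>\<^sup>+ t. \<phi> I' t * indicator {0<..} t \<partial>lborel))"
      using amgm_interval[OF w dy] fin dy unfolding \<mu>_def nr_def \<phi>_def by (intro mult_left_mono) auto
    also have "\<dots> = ennreal (\<alpha> I' * len I') * (\<integral>\<^sup>+ t. \<phi> I' t * indicator {0<..} t \<partial>lborel)"
      using a0 lp by (simp add: ennreal_mult mult.assoc)
    finally show "ennreal ((\<mu> I')^2 * \<alpha> I' / (len I' * nr I')) \<le> ennreal (\<alpha> I' * len I') * (\<integral>\<^sup>+ t. \<phi> I' t * indicator {0<..} t \<partial>lborel)" .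
  qed
  also have "\<dots> = (\<integral>\<^sup>+ t. (\<Sum>I'\<in>Fs. ennreal (\<alpha> I' * len I') * \<phi> I' t) * indicator {0<..} t \<partial>lborel)"
  proof -
    have "(\<Sum>I'\<in>Fs. ennreal (\<alpha> I' * len I') * (\<integral>\<^sup>+ t. \<phi> I' t * indicator {0<..} t \<partial>lborel))
        = (\<Sum>I'\<in>Fs. (\<integral>\<^sup>+ t. ennreal (\<alpha> I' * len I') * (\<phi> I' t * indicator {0<..} t) \<partial>lborel))"
    proof (rule sum.cong[OF refl])
      fix I' assume "I' \<in> Fs"
      then have "(\<lambda>t. \<phi> I' t * indicator {0<..} t) \<in> borel_measurable lborel"
        using pm by blast
      then show "ennreal (\<alpha> I' * len I') * (\<integral>\<^sup>+ t. \<phi> I' t * indicator {0<..} t \<partial>lborel) = (\<integral>\<^sup>+ t. ennreal (\<alpha> I' * len I') * (\<phi> I' t * indicator {0<..} t) \<partial>lborel)"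
        by (rule nn_integral_cmult[symmetric])
    qed
    also have "\<dots> = (\<integral>\<^sup>+ t. (\<Sum>I'\<in>Fs. ennreal (\<alpha> I' * len I') * (\<phi> I' t * indicator {0<..} t)) \<partial>lborel)"
    proof (rule nn_integral_sum[symmetric])
      fix I' assume "I' \<in> Fs"
      then have m1: "(\<lambda>t. \<phi> I' t * indicator {0<..} t) \<in> borel_measurable lborel" using pm by blast
      show "(\<lambda>t. ennreal (\<alpha> I' * len I') * (\<phi> I' t * indicator {0<..} t)) \<in> borel_measurable lborel"
        by (rule borel_measurable_times_ennreal[OF measurable_const m1]) simp
    qed
    also have "\<dots> = (\<integral>\<^sup>+ t. (\<Sum>I'\<in>Fs. ennreal (\<alpha> I' * len I') * \<phi> I' t) * indicator {0<..} t \<partial>lborel)"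
      unfolding sum_distrib_right by (simp only: mult.assoc)
    finally show ?thesis .
  qed
  also have "\<dots> \<le> (\<integral>\<^sup>+ t. ennreal (4 * C1) * Kint * (ennreal (len I * distN w I t) * indicator {0<..} t) \<partial>lborel)"
  proof (rule nn_integral_mono)
    fix t
    define E where "E = {x. t < w x}"
    have Em: "E \<in> sets lborel" unfolding E_def using weight_meas[OF w] by measurable
    have eqs: "{x\<in>J. w x > t} = J \<inter> E" for J by (auto simp: E_def)
    have "(\<Sum>I'\<in>Fs. ennreal (\<alpha> I' * len I') * \<phi> I' t) \<le> ennreal (4 * C1) * Kint * emeasure lborel (I \<inter> E)"
      using key[OF carl C1 I fFs Fs_sub Em] unfolding \<phi>_def distN_def eqs Kint_def .
    also have "emeasure lborel (I \<inter> E) = ennreal (len I * distN w I t)"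
      using emeasure_distN[OF w I, of t] by (simp add: eqs)
    finally show "(\<Sum>I'\<in>Fs. ennreal (\<alpha> I' * len I') * \<phi> I' t) * indicator {0<..} t \<le> ennreal (4 * C1) * Kint * (ennreal (len I * distN w I t) * indicator {0<..} t)"
      by (cases "t > 0") (auto simp: indicator_def mult.assoc)
  qed
  also have "\<dots> = ennreal (4 * C1) * Kint * (\<integral>\<^sup>+ t. ennreal (len I * distN w I t) * indicator {0<..} t \<partial>lborel)"
  proof (rule nn_integral_cmult)
    have "distN w I \<in> borel_measurable borel" by (rule distN_meas[OF w I])
    then show "(\<lambda>t. ennreal (len I * distN w I t) * indicator {0<..} t) \<in> borel_measurable lborel" by simp
  qed
  also have "(\<integral>\<^sup>+ t. ennreal (len I * distN w I t) * indicator {0<..} t \<partial>lborel) = ennreal (\<mu> I)"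
    unfolding \<mu>_def layer_cake[OF w I, symmetric] by (intro nn_integral_cong) (simp add: emeasure_distN[OF w I])
  also have "ennreal (4 * C1) * Kint * ennreal (\<mu> I) = ennreal (4 * C1 * K * \<mu> I)"
    using C1 K0 mu_nn[of I] K_e by (simp add: ennreal_mult)
  finally have "ennreal (\<Sum>I'\<in>Fs. (\<mu> I')^2 * \<alpha> I' / (len I' * nr I')) \<le> ennreal (4 * C1 * K * \<mu> I)" .
  then have "(\<Sum>I'\<in>Fs. (\<mu> I')^2 * \<alpha> I' / (len I' * nr I')) \<le> 4 * C1 * K * \<mu> I"
    using C1 K0 mu_nn[of I] by (simp add: ennreal_le_iff)
  then show ?thesis unfolding Fs_def \<mu>_def nr_def K_def Kint_def .
qed


end


lemma setint_add_children:
  fixes g :: "real \<Rightarrow> real"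
  assumes "\<And>I. I \<in> dyadic_lattice \<Longrightarrow> set_integrable lborel I g"
  shows "set_lebesgue_integral lborel (dyadic_interval j k) g =
     set_lebesgue_integral lborel (dyadic_interval (j+1) (2*k)) g + set_lebesgue_integral lborel (dyadic_interval (j+1) (2*k+1)) g"
proof -
  have d: "dyadic_interval (j+1) (2*k) \<in> dyadic_lattice" "dyadic_interval (j+1) (2*k+1) \<in> dyadic_lattice"
    by (auto simp: dyadic_lattice_iff)
  show ?thesis
    by (subst dy_children(1)) (rule set_integral_Un[OF dy_children(2)[of j k] assms[OF d(1)] assms[OF d(2)]])
qed

theorem theorem2p5:
  fixes \<Psi> :: "real \<Rightarrow> real" and C0 :: real
  assumes Psi_pos: "\<forall>s\<in>{0<..1}. \<Psi> s > 0"
    and Psi_decr: "antimono_on {0<..1} \<Psi>"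
    and sPsi_incr: "mono_on {0<..1} (\<lambda>s. s * \<Psi> s)"
    and Psi_int: "(\<integral>\<^sup>+ s \<in> {0<..1}. ennreal (1 / (s * \<Psi> s)) \<partial>lborel) < \<infinity>"
  shows "\<exists>C::real. \<forall>\<alpha> w J f.
     carleson_seq \<alpha> C0 \<longrightarrow> is_weight w \<longrightarrow>
     (\<forall>I\<in>dyadic_lattice. nPsi \<Psi> (distN w I) < \<infinity>) \<longrightarrow>
     J \<in> dyadic_lattice \<longrightarrow> in_L2w w f \<longrightarrow>
     (\<Sum>\<^sub>\<infinity> I \<in> {I \<in> dyadic_lattice. I \<subseteq> J \<and> \<not> (AE x in lborel. x \<in> I \<longrightarrow> w x = 0)}.
        ennreal ((avg (\<lambda>x. f x * w x) I)\<^sup>2 * \<alpha> I * len I / enn2real (nPsi \<Psi> (distN w I))))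
     \<le> ennreal C * (\<integral>\<^sup>+ x \<in> J. ennreal ((f x)\<^sup>2 * w x) \<partial>lborel)"
proof -
  define K where "K = enn2real (\<integral>\<^sup>+ s \<in> {0<..1}. ennreal (1 / (s * \<Psi> s)) \<partial>lborel)"
  define C1 where "C1 = max C0 0"
  define B where "B = max 1 (4 * C1 * K)"
  have B1: "B \<ge> 1" unfolding B_def by simp
  have C1: "C1 \<ge> 0" unfolding C1_def by simp
  show ?thesis
  proof (intro exI[of _ "4 * B"] allI impI)
    fix \<alpha> w J f
    assume carl0: "carleson_seq \<alpha> C0" and w: "is_weight w"
      and fin: "\<forall>I\<in>dyadic_lattice. nPsi \<Psi> (distN w I) < \<infinity>"
      and J: "J \<in> dyadic_lattice" and f: "in_L2w w f"
    have carl: "carleson_seq \<alpha> C1"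
      unfolding carleson_seq_def
    proof (intro conjI ballI)
      fix I assume "I \<in> dyadic_lattice"
      then show "\<alpha> I \<ge> 0" using carl0 unfolding carleson_seq_def by blast
    next
      fix J' assume J': "J' \<in> dyadic_lattice"
      have "(\<Sum>\<^sub>\<infinity> I \<in> {I \<in> dyadic_lattice. I \<subseteq> J'}. ennreal (\<alpha> I * len I)) \<le> ennreal (C0 * len J')"
        using carl0 J' unfolding carleson_seq_def by blast
      also have "\<dots> \<le> ennreal (C1 * len J')"
        using dy_len_pos[OF J'] by (intro ennreal_leI mult_right_mono) (auto simp: C1_def)
      finally show "(\<Sum>\<^sub>\<infinity> I \<in> {I \<in> dyadic_lattice. I \<subseteq> J'}. ennreal (\<alpha> I * len I)) \<le> ennreal (C1 * len J')" .
    qed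
    have anc: "\<alpha> I \<ge> 0" if "I \<in> dyadic_lattice" for I using carl that unfolding carleson_seq_def by blast
    define \<mu> where "\<mu> I = set_lebesgue_integral lborel I w" for I
    define a where "a I = set_lebesgue_integral lborel I (\<lambda>x. f x * w x)" for I
    define \<Phi> where "\<Phi> I = set_lebesgue_integral lborel I (\<lambda>x. (f x)^2 * w x)" for I
    define nr where "nr I = enn2real (nPsi \<Psi> (distN w I))" for I
    define \<beta> where "\<beta> I = (\<mu> I)^2 * \<alpha> I / (len I * nr I) / B" for I
    define T where "T I = (avg (\<lambda>x. f x * w x) I)\<^sup>2 * \<alpha> I * len I / enn2real (nPsi \<Psi> (distN w I))" for I
    have mu_nn: "\<mu> I \<ge> 0" for I unfolding \<mu>_def using weight_nn[OF w] by (intro setint_nonneg) auto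
    have Phi_nn: "\<Phi> I \<ge> 0" for I unfolding \<Phi>_def using weight_nn[OF w] by (intro setint_nonneg) auto
    have csq: "a I ^2 \<le> \<Phi> I * \<mu> I" "\<mu> I = 0 \<Longrightarrow> a I = 0" if "I \<in> dyadic_lattice" for I
    proof -
      have q: "0 \<le> \<Phi> I - 2 * c * a I + c^2 * \<mu> I" for c
        using cs_quad[OF w f that, of c] unfolding \<Phi>_def a_def \<mu>_def .
      show "a I ^2 \<le> \<Phi> I * \<mu> I" by (rule cs_ineq(1)[OF q mu_nn])
      show "\<mu> I = 0 \<Longrightarrow> a I = 0" by (rule cs_ineq(2)[OF q mu_nn])
    qed
    have dyjk: "dyadic_interval j k \<in> dyadic_lattice" for j k by (auto simp: dyadic_lattice_iff)
    have T_eq: "T I = B * (\<beta> I * (a I / \<mu> I)^2)" if "I \<in> dyadic_lattice" for I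
    proof (cases "\<mu> I = 0")
      case True
      then have "a I = 0" using csq(2)[OF that] by simp
      then show ?thesis using True by (simp add: T_def \<beta>_def avg_def a_def)
    next
      case False
      have lp: "len I > 0" using dy_len_pos[OF that] .
      show ?thesis using False lp B1
        by (simp add: T_def \<beta>_def avg_def a_def nr_def power2_eq_square field_simps)
    qed
    have T_nn: "T I \<ge> 0" if "I \<in> dyadic_lattice" for I
      using anc[OF that] dy_len_pos[OF that] by (simp add: T_def)
    let ?S = "{I \<in> dyadic_lattice. I \<subseteq> J \<and> \<not> (AE x in lborel. x \<in> I \<longrightarrow> w x = 0)}"
    have "(\<Sum>\<^sub>\<infinity> I \<in> ?S. ennreal (T I)) \<le> ennreal (4 * B) * (\<integral>\<^sup>+ x \<in> J. ennreal ((f x)\<^sup>2 * w x) \<partial>lborel)"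
    proof (rule infsum_le_finite_sums)
      show "(\<lambda>I. ennreal (T I)) summable_on ?S" by (rule nonneg_summable_on_complete) simp
      fix F assume F: "finite F" "F \<subseteq> ?S"
      have Fdy: "F \<subseteq> dyadic_lattice" using F by auto
      obtain j k where Jjk: "J = dyadic_interval j k" using J by (auto simp: dyadic_lattice_iff)
      have FJ: "{I'\<in>F. I' \<subseteq> J} = F" using F by auto
      have bel: "(\<Sum>I'\<in>{I'\<in>F. I' \<subseteq> dyadic_interval j k}. \<beta> I' * (a I' / \<mu> I')^2) \<le> 4 * \<Phi> (dyadic_interval j k)"
      proof (rule bellman[OF F(1) Fdy])
        show "\<mu> (dyadic_interval j k) = \<mu> (dyadic_interval (j+1) (2*k)) + \<mu> (dyadic_interval (j+1) (2*k+1))" for j k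
          unfolding \<mu>_def by (rule setint_add_children) (rule w_setint[OF w])
        show "a (dyadic_interval j k) = a (dyadic_interval (j+1) (2*k)) + a (dyadic_interval (j+1) (2*k+1))" for j k
          unfolding a_def by (rule setint_add_children) (rule fw_setint[OF w f])
        show "\<Phi> (dyadic_interval j k) = \<Phi> (dyadic_interval (j+1) (2*k)) + \<Phi> (dyadic_interval (j+1) (2*k+1))" for j k
          unfolding \<Phi>_def by (rule setint_add_children) (rule f2w_setint[OF w f dy_sets'])
        show "\<mu> (dyadic_interval j k) \<ge> 0" for j k by (rule mu_nn)
        show "\<Phi> (dyadic_interval j k) \<ge> 0" for j k by (rule Phi_nn)
        show "(a (dyadic_interval j k))^2 \<le> \<Phi> (dyadic_interval j k) * \<mu> (dyadic_interval j k)" for j k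
          by (rule csq(1)[OF dyjk])
        show "\<mu> (dyadic_interval j k) = 0 \<Longrightarrow> a (dyadic_interval j k) = 0" for j k
          by (rule csq(2)[OF dyjk])
        show "\<beta> I \<ge> 0" if "I \<in> F" for I
          using anc[of I] dy_len_pos[of I] that Fdy B1 by (auto simp: \<beta>_def nr_def)
        show "(\<Sum>I'\<in>{I'\<in>F. I' \<subseteq> dyadic_interval j k}. \<beta> I') \<le> \<mu> (dyadic_interval j k)" for j k
        proof -
          have "(\<Sum>I'\<in>{I'\<in>F. I' \<subseteq> dyadic_interval j k}. (\<mu> I')^2 * \<alpha> I' / (len I' * nr I')) \<le> 4 * C1 * K * \<mu> (dyadic_interval j k)"
            unfolding \<mu>_def nr_def K_def
            by (rule beta_carl[OF Psi_pos Psi_decr sPsi_incr Psi_int carl C1 w fin dyjk F(1) Fdy])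
          also have "\<dots> \<le> B * \<mu> (dyadic_interval j k)"
            unfolding B_def by (intro mult_right_mono mu_nn) auto
          finally have "(\<Sum>I'\<in>{I'\<in>F. I' \<subseteq> dyadic_interval j k}. (\<mu> I')^2 * \<alpha> I' / (len I' * nr I')) / B \<le> \<mu> (dyadic_interval j k)"
            using B1 by (simp add: divide_simps mult.commute)
          then show ?thesis unfolding \<beta>_def by (simp add: sum_divide_distrib)
        qed
      qed
      have "(\<Sum>I\<in>F. ennreal (T I)) = ennreal (\<Sum>I\<in>F. T I)"
        using T_nn Fdy by (intro sum_ennreal) auto
      also have "(\<Sum>I\<in>F. T I) = B * (\<Sum>I\<in>F. \<beta> I * (a I / \<mu> I)^2)"
        using T_eq Fdy by (simp add: sum_distrib_left subset_iff)
      also have "\<dots> \<le> B * (4 * \<Phi> J)"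
        using bel B1 unfolding FJ[unfolded Jjk] Jjk by (intro mult_left_mono) auto
      also have "ennreal (B * (4 * \<Phi> J)) = ennreal (4 * B) * ennreal (\<Phi> J)"
        using B1 Phi_nn[of J] by (simp add: ennreal_mult[symmetric] mult_ac)
      also have "ennreal (\<Phi> J) = (\<integral>\<^sup>+ x \<in> J. ennreal ((f x)\<^sup>2 * w x) \<partial>lborel)"
        unfolding \<Phi>_def
        by (rule nn_set_integral_eq_set_integral[symmetric, OF f2w_int[OF w f]])
           (use weight_nn[OF w] dy_sets'[OF J] in auto)
      finally show "(\<Sum>I\<in>F. ennreal (T I)) \<le> ennreal (4 * B) * (\<integral>\<^sup>+ x \<in> J. ennreal ((f x)\<^sup>2 * w x) \<partial>lborel)"
        by (simp add: ennreal_leI)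
    qed
    then show "(\<Sum>\<^sub>\<infinity> I \<in> ?S. ennreal ((avg (\<lambda>x. f x * w x) I)\<^sup>2 * \<alpha> I * len I / enn2real (nPsi \<Psi> (distN w I))))
     \<le> ennreal (4 * B) * (\<integral>\<^sup>+ x \<in> J. ennreal ((f x)\<^sup>2 * w x) \<partial>lborel)"
      unfolding T_def .
  qed
qed

end
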